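(* Consider the CT–DT interconnected system of the context and let Assumptions (A1), (A2), (A3) hold with norms $\|\cdot\|_{\mathcal X}$, $\|\cdot\|_{\mathcal Z}$. Let $\xi\in\mathbb R$ with $\xi\ge\mathsf{osLip}_x(f)$ and let $\zeta>0$ be such that $\mathsf{osLip}\big(x\mapsto f(x,z^*(x))\big)\le-\zeta$, where $z^*(x)$ is the unique fixed point of $z\mapsto\mathsf G(x,z)$. Define $$C_1:=\frac{\mathsf{Lip}_z(f)\mathsf{Lip}_x(\mathsf G)}{1-\mathsf{Lip}_z(\mathsf G)}\Big(\mathsf{Lip}_x(f)+\frac{\mathsf{Lip}_z(f)\mathsf{Lip}_x(\mathsf G)}{1-\mathsf{Lip}_z(\mathsf G)}\Big),\qquad C_2(n):=[\mathsf{Lip}_z(\mathsf G)]^n\frac{\mathsf{Lip}_x(\mathsf G)\mathsf{Lip}_z(f)}{1-\mathsf{Lip}_z(\mathsf G)},$$ and $$T(n):=\begin{cases}\dfrac1\xi\log\Big(\dfrac{\xi(1-[\mathsf{Lip}_z(\mathsf G)]^n)}{C_2(n)+C_1/\zeta}+1\Big),&\xi\ne0,\\[2ex]\dfrac{1-[\mathsf{Lip}_z(\mathsf G)]^n}{C_2(n)+C_1/\zeta},&\xi=0,\end{cases}$$ (for $\xi<0$ such that the argument of the logarithm is $\le 0$, interpret $T(n)=+\infty$). Then for every $n\in\mathbb Z_{>0}$, $T(n)>0$, and for every $T$ with $0<T<T(n)$ the origin is globally exponentially stable for the interconnected system: there exist $\eta\in\mathbb R^2_{>0}$, $\varrho>0$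 and $\alpha>0$ such that every solution satisfies $$\big\|(\|x(t)\|_{\mathcal X},\|z(t)\|_{\mathcal Z})\big\|_{2,[\eta]}\le\varrho e^{-\alpha t}\big\|(\|x(0)\|_{\mathcal X},\|z(0)\|_{\mathcal Z})\big\|_{2,[\eta]}\quad\forall t\ge0,$$ where $\|(v_1,v_2)\|_{2,[\eta]}:=\sqrt{\eta_1v_1^2+\eta_2v_2^2}$.
   Context: Setup. Let $\|\cdot\|_{\mathcal X}$ be a norm on $\mathbb R^{n_x}$ and $\|\cdot\|_{\mathcal Z}$ a norm on $\mathbb R^{n_z}$; $\mathcal X\subseteq\mathbb R^{n_x}$, $\mathcal Z\subseteq\mathbb R^{n_z}$ convex. $f:\mathcal X\times\mathcal Z\to\mathbb R^{n_x}$ and $\mathsf G:\mathcal X\times\mathcal Z\to\mathcal Z$ continuous, $\mathsf G^1=\mathsf G$, $\mathsf G^{m+1}(x,z)=\mathsf G(x,\mathsf G^m(x,z))$. For $T>0$, $n\in\mathbb Z_{>0}$ the interconnected system is $\dot x(t)=f(x(t),z(t))$, $z_k=\mathsf G^n(x(kT),z_{k-1})$, $z(t)=z_k$ for $t\in[kT,(k+1)T)$, with $\mathcal X\times\mathcal Z$ forward invariant; $f(0,0)=0$, $\mathsf G(0,0)=0$ (so $z^*(0)=0$). Lipschitz notions: $\mathsf{Lip}_z(f):=\sup_x\sup_{z_1\ne z_2}\|f(x,z_1)-f(x,z_2)\|_{\mathcal X}/\|z_1-z_2\|_{\mathcal Z}$, and $\mathsf{Lip}_x(f),\mathsf{Lip}_x(\mathsf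 G),\mathsf{Lip}_z(\mathsf G)$ analogously. $\llbracket\cdot;\cdot\rrbracket$ is a weak pairing on $\mathbb R^{n_x}$ compatible with $\|\cdot\|_{\mathcal X}$; $\mathsf{osLip}_x(f):=\sup_z\sup_{x_1\ne x_2}\llbracket f(x_1,z)-f(x_2,z);x_1-x_2\rrbracket/\|x_1-x_2\|_{\mathcal X}^2$; for $F:\mathcal X\to\mathbb R^{n_x}$, $\mathsf{osLip}(F):=\sup_{x_1\ne x_2}\llbracket F(x_1)-F(x_2);x_1-x_2\rrbracket/\|x_1-x_2\|^2_{\mathcal X}$. Assumptions: (A1) $\mathsf{Lip}_x(f)<\infty$; (A2) $\mathsf{Lip}_z(f)\in(0,\infty)$ and $\mathsf{Lip}_x(\mathsf G)\in(0,\infty)$; (A3) $\mathsf{Lip}_z(\mathsf G)<1$. *)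

theory Defs
  imports "HOL-Analysis.Analysis"
begin

definition is_norm :: "('v::real_vector \<Rightarrow> real) \<Rightarrow> bool" where
  "is_norm N \<longleftrightarrow>
     (\<forall>x. N x = 0 \<longleftrightarrow> x = 0) \<and>
     (\<forall>a x. N (a *\<^sub>R x) = \<bar>a\<bar> * N x) \<and>
     (\<forall>x y. N (x + y) \<le> N x + N y)"

definition weak_pairing :: "('v::real_normed_vector \<Rightarrow> 'v \<Rightarrow> real) \<Rightarrow> bool" where
  "weak_pairing wp \<longleftrightarrow>
     (\<forall>x1 x2 y. wp (x1 + x2) y \<le> wp x1 y + wp x2 y) \<and>
     (\<forall>y. continuous_on UNIV (\<lambda>x. wp x y)) \<and>
     (\<forall>a x y. a \<ge> 0 \<longrightarrow> wp (a *\<^sub>R x) y = a * wp x y \<and> wp x (a *\<^sub>R y) = a * wp x y) \<and>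
     (\<forall>x y. wp (- x) (- y) = wp x y) \<and>
     (\<forall>x. x \<noteq> 0 \<longrightarrow> wp x x > 0) \<and>
     (\<forall>x y. \<bar>wp x y\<bar> \<le> sqrt (wp x x) * sqrt (wp y y))"

text \<open>Compatibility with a norm, together with Deimling's inequality and the curve norm
  derivative formula (standing conventions for weak pairings in this literature).\<close>
definition compatible_weak_pairing ::
    "('v::real_normed_vector \<Rightarrow> 'v \<Rightarrow> real) \<Rightarrow> ('v \<Rightarrow> real) \<Rightarrow> bool" where
  "compatible_weak_pairing wp N \<longleftrightarrow>
     weak_pairing wp \<and>
     (\<forall>x. wp x x = (N x)\<^sup>2) \<and>
     (\<forall>x y D. ((\<lambda>h. (N (y + h *\<^sub>R x) - N y) / h) \<longlongrightarrow> D) (at_right 0)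
              \<longrightarrow> wp x y \<le> N y * D) \<and>
     (\<forall>a b (c :: real \<Rightarrow> 'v) c'. a < b \<longrightarrow>
        (\<forall>t\<in>{a<..<b}. (c has_vector_derivative c' t) (at t)) \<longrightarrow>
        (AE t in lebesgue_on {a<..<b}.
           ((\<lambda>h. N (c t) * ((N (c (t + h)) - N (c t)) / h)) \<longlongrightarrow> wp (c' t) (c t))
             (at_right 0)))"

definition Lip_z :: "('x \<Rightarrow> 'z::minus \<Rightarrow> 'w::minus) \<Rightarrow> ('w \<Rightarrow> real) \<Rightarrow> ('z \<Rightarrow> real)
    \<Rightarrow> 'x set \<Rightarrow> 'z set \<Rightarrow> ereal" where
  "Lip_z F NW NZ X Z =
     (SUP (x, z1, z2) \<in> {(x, z1, z2). x \<in> X \<and> z1 \<in> Z \<and> z2 \<in> Z \<and> z1 \<noteq> z2}.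
        ereal (NW (F x z1 - F x z2) / NZ (z1 - z2)))"

definition Lip_x :: "('x::minus \<Rightarrow> 'z \<Rightarrow> 'w::minus) \<Rightarrow> ('w \<Rightarrow> real) \<Rightarrow> ('x \<Rightarrow> real)
    \<Rightarrow> 'x set \<Rightarrow> 'z set \<Rightarrow> ereal" where
  "Lip_x F NW NX X Z =
     (SUP (z, x1, x2) \<in> {(z, x1, x2). z \<in> Z \<and> x1 \<in> X \<and> x2 \<in> X \<and> x1 \<noteq> x2}.
        ereal (NW (F x1 z - F x2 z) / NX (x1 - x2)))"

definition osLip_x :: "('x::minus \<Rightarrow> 'z \<Rightarrow> 'x) \<Rightarrow> ('x \<Rightarrow> 'x \<Rightarrow> real) \<Rightarrow> ('x \<Rightarrow> real)
    \<Rightarrow> 'x set \<Rightarrow> 'z set \<Rightarrow> ereal" where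
  "osLip_x F wp NX X Z =
     (SUP (z, x1, x2) \<in> {(z, x1, x2). z \<in> Z \<and> x1 \<in> X \<and> x2 \<in> X \<and> x1 \<noteq> x2}.
        ereal (wp (F x1 z - F x2 z) (x1 - x2) / (NX (x1 - x2))\<^sup>2))"

definition osLip :: "('x::minus \<Rightarrow> 'x) \<Rightarrow> ('x \<Rightarrow> 'x \<Rightarrow> real) \<Rightarrow> ('x \<Rightarrow> real)
    \<Rightarrow> 'x set \<Rightarrow> ereal" where
  "osLip F wp NX X =
     (SUP (x1, x2) \<in> {(x1, x2). x1 \<in> X \<and> x2 \<in> X \<and> x1 \<noteq> x2}.
        ereal (wp (F x1 - F x2) (x1 - x2) / (NX (x1 - x2))\<^sup>2))"

definition Giter :: "('x \<Rightarrow> 'z \<Rightarrow> 'z) \<Rightarrow> nat \<Rightarrow> 'x \<Rightarrow> 'z \<Rightarrow> 'z" where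
  "Giter G n x z = (G x ^^ n) z"

text \<open>A (global, forward) solution: x is the continuous-time state on [0,oo), zd k = z_k
  for k \<ge> 0, zm1 = z_{-1} the initial discrete state; z(t) = z_k on [kT,(k+1)T).\<close>
definition interconnected_solution ::
    "('x::real_normed_vector \<Rightarrow> 'z \<Rightarrow> 'x) \<Rightarrow> ('x \<Rightarrow> 'z \<Rightarrow> 'z) \<Rightarrow> 'x set \<Rightarrow> 'z set
     \<Rightarrow> real \<Rightarrow> nat \<Rightarrow> (real \<Rightarrow> 'x) \<Rightarrow> 'z \<Rightarrow> (nat \<Rightarrow> 'z) \<Rightarrow> bool" where
  "interconnected_solution f G X Z T n x zm1 zd \<longleftrightarrow>
     zm1 \<in> Z \<and>
     (\<forall>t\<ge>0. x t \<in> X) \<and>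
     zd 0 = Giter G n (x 0) zm1 \<and>
     (\<forall>k. zd (Suc k) = Giter G n (x (real (Suc k) * T)) (zd k)) \<and>
     (\<forall>k. \<forall>t\<in>{real k * T .. real (Suc k) * T}.
        (x has_vector_derivative f (x t) (zd k)) (at t within {real k * T .. real (Suc k) * T}))"

definition zsig :: "real \<Rightarrow> (nat \<Rightarrow> 'z) \<Rightarrow> real \<Rightarrow> 'z" where
  "zsig T zd t = zd (nat \<lfloor>t / T\<rfloor>)"

definition eta_norm :: "real \<Rightarrow> real \<Rightarrow> real \<Rightarrow> real \<Rightarrow> real" where
  "eta_norm \<eta>1 \<eta>2 v1 v2 = sqrt (\<eta>1 * v1\<^sup>2 + \<eta>2 * v2\<^sup>2)"

definition C1_const :: "real \<Rightarrow> real \<Rightarrow> real \<Rightarrow> real \<Rightarrow> real" where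
  "C1_const Lxf Lzf LxG LzG =
     (Lzf * LxG / (1 - LzG)) * (Lxf + Lzf * LxG / (1 - LzG))"

definition C2_const :: "real \<Rightarrow> real \<Rightarrow> real \<Rightarrow> nat \<Rightarrow> real" where
  "C2_const Lzf LxG LzG n = LzG ^ n * (LxG * Lzf / (1 - LzG))"

definition T_crit :: "real \<Rightarrow> real \<Rightarrow> real \<Rightarrow> real \<Rightarrow> real \<Rightarrow> nat \<Rightarrow> ereal" where
  "T_crit \<xi> \<zeta> C1 C2 LzG n =
     (if \<xi> = 0 then ereal ((1 - LzG ^ n) / (C2 + C1 / \<zeta>))
      else (let a = \<xi> * (1 - LzG ^ n) / (C2 + C1 / \<zeta>) + 1 in
            if a \<le> 0 then \<infinity> else ereal (ln a / \<xi>)))"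

end

theory Submission
  imports Defs
begin

lemma nrm_0: "is_norm N \<Longrightarrow> N 0 = 0"
  unfolding is_norm_def by auto

lemma nrm_neg: "is_norm N \<Longrightarrow> N (- x) = N x"
  unfolding is_norm_def by (metis abs_minus_cancel abs_one mult_1 scaleR_minus1_left)

lemma nrm_nonneg: "is_norm N \<Longrightarrow> N x \<ge> 0"
proof -
  assume n: "is_norm N"
  have "N (x + - x) \<le> N x + N (- x)" using n unfolding is_norm_def by blast
  then show ?thesis using nrm_0[OF n] nrm_neg[OF n, of x] by simp
qed

lemma nrm_tri: "is_norm N \<Longrightarrow> N (x + y) \<le> N x + N y"
  unfolding is_norm_def by blast

lemma nrm_scale: "is_norm N \<Longrightarrow> N (a *\<^sub>R x) = \<bar>a\<bar> * N x"
  unfolding is_norm_def by blast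

lemma nrm_eq0: "is_norm N \<Longrightarrow> N x = 0 \<longleftrightarrow> x = 0"
  unfolding is_norm_def by blast

lemma nrm_pos: "is_norm N \<Longrightarrow> x \<noteq> 0 \<Longrightarrow> N x > 0"
  using nrm_nonneg nrm_eq0 by (metis less_eq_real_def)

lemma nrm_diff_tri: "is_norm N \<Longrightarrow> N (x - z) \<le> N (x - y) + N (y - z)"
  using nrm_tri[of N "x - y" "y - z"] by simp

lemma nrm_commute: "is_norm N \<Longrightarrow> N (x - y) = N (y - x)"
  using nrm_neg[of N "x - y"] by simp

lemma nrm_rev_tri: "is_norm N \<Longrightarrow> N x - N y \<le> N (x - y)"
  using nrm_tri[of N "x - y" y] by simp

lemma nrm_sum: assumes n: "is_norm N" and fin: "finite A" shows "N (sum g A) \<le> (\<Sum>i\<in>A. N (g i))"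
  using fin
proof (induction A rule: finite_induct)
  case empty then show ?case by (simp add: nrm_0[OF n])
next
  case (insert a A)
  then show ?case using nrm_tri[OF n, of "g a" "sum g A"] by simp
qed

lemma nrm_bound:
  fixes N :: "'v::euclidean_space \<Rightarrow> real"
  assumes n: "is_norm N"
  shows "\<exists>C>0. \<forall>x. N x \<le> C * norm x"
proof -
  define C where "C = 1 + (\<Sum>i\<in>Basis. N i)"
  have C0: "C > 0" unfolding C_def using nrm_nonneg[OF n] by (simp add: add_pos_nonneg sum_nonneg)
  have "N x \<le> C * norm x" for x
  proof -
    have "N x = N (\<Sum>i\<in>Basis. (x \<bullet> i) *\<^sub>R i)" by (simp add: euclidean_representation)
    also have "\<dots> \<le> (\<Sum>i\<in>Basis. N ((x \<bullet> i) *\<^sub>R i))" by (rule nrm_sum[OF n]) simp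
    also have "\<dots> = (\<Sum>i\<in>Basis. \<bar>x \<bullet> i\<bar> * N i)" by (simp add: nrm_scale[OF n])
    also have "\<dots> \<le> (\<Sum>i\<in>Basis. norm x * N i)"
      by (rule sum_mono) (simp add: Basis_le_norm mult_right_mono nrm_nonneg[OF n])
    also have "\<dots> = norm x * (\<Sum>i\<in>Basis. N i)" by (simp add: sum_distrib_left)
    also have "\<dots> \<le> C * norm x" unfolding C_def by (simp add: algebra_simps)
    finally show ?thesis .
  qed
  then show ?thesis using C0 by blast
qed

lemma nrm_cont:
  fixes N :: "'v::euclidean_space \<Rightarrow> real"
  assumes n: "is_norm N"
  shows "continuous_on S N"
proof -
  obtain C where C: "C > 0" "\<And>x. N x \<le> C * norm x" using nrm_bound[OF n] by blast
  have "\<bar>N x - N y\<bar> \<le> C * norm (x - y)" for x y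
    using nrm_rev_tri[OF n, of x y] nrm_rev_tri[OF n, of y x] C(2)[of "x - y"] C(2)[of "y - x"]
    by (simp add: norm_minus_commute)
  then have "C-lipschitz_on S N"
    using C(1) by (intro lipschitz_onI) (auto simp: dist_norm dist_real_def)
  then show ?thesis by (rule lipschitz_on_continuous_on)
qed

context
  fixes wp :: "'v::real_normed_vector \<Rightarrow> 'v \<Rightarrow> real" and N :: "'v \<Rightarrow> real"
  assumes n: "is_norm N" and cw: "compatible_weak_pairing wp N"
begin

lemma wpp: "weak_pairing wp"
  using cw unfolding compatible_weak_pairing_def by (elim conjE)

lemma wp_sq: "wp x x = (N x)\<^sup>2"
proof -
  have "\<forall>x. wp x x = (N x)\<^sup>2" using cw unfolding compatible_weak_pairing_def by (elim conjE)
  then show ?thesis by (rule spec)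
qed

lemma wp_add: "wp (x1 + x2) y \<le> wp x1 y + wp x2 y"
proof -
  have "\<forall>x1 x2 y. wp (x1 + x2) y \<le> wp x1 y + wp x2 y" using wpp unfolding weak_pairing_def by (elim conjE)
  then show ?thesis by simp
qed

lemma wp_hom: "a \<ge> 0 \<Longrightarrow> wp (a *\<^sub>R x) y = a * wp x y \<and> wp x (a *\<^sub>R y) = a * wp x y"
proof -
  assume a: "a \<ge> 0"
  have "\<forall>a x y. a \<ge> 0 \<longrightarrow> wp (a *\<^sub>R x) y = a * wp x y \<and> wp x (a *\<^sub>R y) = a * wp x y"
    using wpp unfolding weak_pairing_def by (elim conjE)
  then show ?thesis using a by simp
qed

lemma wp_zero1: "wp 0 y = 0"
  using wp_hom[of 0 y y] by simp

lemma wp_zero2: "wp x 0 = 0"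
  using wp_hom[of 0 x x] by simp

lemma wp_CS: "wp x y \<le> N x * N y"
proof -
  have "\<forall>x y. \<bar>wp x y\<bar> \<le> sqrt (wp x x) * sqrt (wp y y)"
    using wpp unfolding weak_pairing_def by (elim conjE)
  then have "\<bar>wp x y\<bar> \<le> sqrt (wp x x) * sqrt (wp y y)" by blast
  also have "\<dots> = N x * N y" using wp_sq nrm_nonneg[OF n] by simp
  finally show ?thesis by simp
qed

lemma wp_neg: "- wp (- v) y \<le> wp v y"
  using wp_add[of v "- v" y] wp_zero1 by simp

lemma deimling: "((\<lambda>h. (N (y + h *\<^sub>R x) - N y) / h) \<longlongrightarrow> D) (at_right 0) \<Longrightarrow> wp x y \<le> N y * D"
proof -
  assume h: "((\<lambda>h. (N (y + h *\<^sub>R x) - N y) / h) \<longlongrightarrow> D) (at_right 0)"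
  have "\<forall>x y D. ((\<lambda>h. (N (y + h *\<^sub>R x) - N y) / h) \<longlongrightarrow> D) (at_right 0) \<longrightarrow> wp x y \<le> N y * D"
    using cw unfolding compatible_weak_pairing_def by (elim conjE)
  then show ?thesis using h by blast
qed

lemma dq_mono:
  assumes "0 < h1" "h1 \<le> h2"
  shows "(N (y + h1 *\<^sub>R x) - N y) / h1 \<le> (N (y + h2 *\<^sub>R x) - N y) / h2"
proof -
  define t where "t = h1 / h2"
  have t: "0 < t" "t \<le> 1" using assms by (auto simp: t_def)
  have "y + h1 *\<^sub>R x = (1 - t) *\<^sub>R y + t *\<^sub>R (y + h2 *\<^sub>R x)"
    using assms by (simp add: t_def algebra_simps)
  then have "N (y + h1 *\<^sub>R x) \<le> N ((1 - t) *\<^sub>R y) + N (t *\<^sub>R (y + h2 *\<^sub>R x))"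
    using nrm_tri[OF n] by metis
  also have "\<dots> = (1 - t) * N y + t * N (y + h2 *\<^sub>R x)"
    using t by (simp add: nrm_scale[OF n])
  finally have "N (y + h1 *\<^sub>R x) - N y \<le> t * (N (y + h2 *\<^sub>R x) - N y)"
    by (simp add: algebra_simps)
  then have "(N (y + h1 *\<^sub>R x) - N y) / h1 \<le> t * (N (y + h2 *\<^sub>R x) - N y) / h1"
    using assms by (simp add: divide_right_mono)
  also have "\<dots> = (N (y + h2 *\<^sub>R x) - N y) / h2"
    using assms by (simp add: t_def)
  finally show ?thesis .
qed

lemma dq_lower:
  assumes "0 < h"
  shows "- N x \<le> (N (y + h *\<^sub>R x) - N y) / h"
proof -
  have "N y \<le> N (y + h *\<^sub>R x) + N (- (h *\<^sub>R x))"
    using nrm_tri[OF n, of "y + h *\<^sub>R x" "- (h *\<^sub>R x)"] by simp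
  then have "N y \<le> N (y + h *\<^sub>R x) + h * N x"
    using assms by (simp add: nrm_neg[OF n] nrm_scale[OF n])
  then show ?thesis using assms by (simp add: field_simps)
qed

lemma dq_lim: "\<exists>D. ((\<lambda>h. (N (y + h *\<^sub>R x) - N y) / h) \<longlongrightarrow> D) (at_right 0)"
proof -
  define q where "q h = (N (y + h *\<^sub>R x) - N y) / h" for h
  define D where "D = Inf (q ` {0<..})"
  have bdd: "bdd_below (q ` {0<..})"
    using dq_lower unfolding q_def by (intro bdd_belowI[of _ "- N x"]) auto
  have ne: "q ` {0<..} \<noteq> {}" by auto
  have Dle: "D \<le> q h" if "h > 0" for h
    unfolding D_def using bdd that by (intro cInf_lower) auto
  have "(q \<longlongrightarrow> D) (at_right 0)"
  proof (rule tendstoI)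
    fix e :: real assume e: "e > 0"
    have "\<exists>v\<in>q ` {0<..}. v < D + e"
      unfolding D_def using ne e by (intro cInf_lessD) auto
    then obtain h0 where h0: "h0 > 0" "q h0 < D + e" by auto
    show "\<forall>\<^sub>F h in at_right 0. dist (q h) D < e"
      unfolding eventually_at_right_field
    proof (intro exI[of _ h0] conjI allI impI)
      show "0 < h0" by fact
      fix h :: real assume "0 < h" "h < h0"
      then have "q h \<le> q h0" unfolding q_def by (intro dq_mono) auto
      then show "dist (q h) D < e" using Dle[OF \<open>0 < h\<close>] h0 by (simp add: dist_real_def)
    qed
  qed
  then show ?thesis unfolding q_def by blast
qed

lemma left_step:
  assumes bnd: "wp v y \<le> \<mu> * (N y)\<^sup>2 + \<beta> * N y" and b: "\<beta> \<ge> 0" and e: "\<epsilon> > 0"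
  shows "\<exists>d>0. \<forall>h. 0 < h \<and> h < d \<longrightarrow> N (y - h *\<^sub>R v) \<ge> N y - h * (\<mu> * N y + \<beta> + \<epsilon>)"
proof (cases "y = 0")
  case True
  show ?thesis
  proof (intro exI[of _ 1] conjI allI impI)
    fix h :: real assume h: "0 < h \<and> h < 1"
    have "N (y - h *\<^sub>R v) \<ge> 0" by (rule nrm_nonneg[OF n])
    moreover have "N y - h * (\<mu> * N y + \<beta> + \<epsilon>) \<le> 0"
      using True h b e by (simp add: nrm_0[OF n])
    ultimately show "N (y - h *\<^sub>R v) \<ge> N y - h * (\<mu> * N y + \<beta> + \<epsilon>)" by linarith
  qed simp
next
  case False
  then have Ny: "N y > 0" using nrm_pos[OF n] by blast
  obtain D where D: "((\<lambda>h. (N (y + h *\<^sub>R (- v)) - N y) / h) \<longlongrightarrow> D) (at_right 0)"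
    using dq_lim by blast
  have "wp (- v) y \<le> N y * D" by (rule deimling[OF D])
  with wp_neg[of v y] bnd have "- (N y * D) \<le> \<mu> * (N y)\<^sup>2 + \<beta> * N y" by linarith
  then have "N y * (- D) \<le> N y * (\<mu> * N y + \<beta>)" by (simp add: power2_eq_square algebra_simps)
  then have Dle: "- D \<le> \<mu> * N y + \<beta>" by (rule mult_left_le_imp_le[OF _ Ny])
  from D e have "\<forall>\<^sub>F h in at_right 0. dist ((N (y + h *\<^sub>R (- v)) - N y) / h) D < \<epsilon>"
    by (rule tendstoD)
  then obtain d where d: "d > 0" "\<And>h. 0 < h \<Longrightarrow> h < d \<Longrightarrow> dist ((N (y + h *\<^sub>R (- v)) - N y) / h) D < \<epsilon>"
    unfolding eventually_at_right_field by auto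
  show ?thesis
  proof (intro exI[of _ d] conjI allI impI)
    fix h :: real assume h: "0 < h \<and> h < d"
    then have "(N (y - h *\<^sub>R v) - N y) / h > D - \<epsilon>" using d(2)[of h] by (simp add: dist_real_def)
    then have "N (y - h *\<^sub>R v) - N y > h * (D - \<epsilon>)" using h by (simp add: field_simps)
    moreover have "h * (D - \<epsilon>) \<ge> - h * (\<mu> * N y + \<beta> + \<epsilon>)"
    proof -
      have "h * (- D) \<le> h * (\<mu> * N y + \<beta>)" using h Dle by (intro mult_left_mono) auto
      then show ?thesis by (simp add: algebra_simps)
    qed
    ultimately show "N (y - h *\<^sub>R v) \<ge> N y - h * (\<mu> * N y + \<beta> + \<epsilon>)" by linarith
  qed (fact d)
qed

end

definition phi :: "real \<Rightarrow> real \<Rightarrow> real" where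
  "phi \<mu> t = (if \<mu> = 0 then t else (exp (\<mu> * t) - 1) / \<mu>)"

lemma mu_phi: "\<mu> * phi \<mu> t = exp (\<mu> * t) - 1"
  by (simp add: phi_def)

lemma phi_0: "phi \<mu> 0 = 0" by (simp add: phi_def)

lemma phi_deriv: "((\<lambda>t. phi \<mu> (t - a)) has_real_derivative exp (\<mu> * (s - a))) (at s)"
proof (cases "\<mu> = 0")
  case True
  then show ?thesis unfolding phi_def by (auto intro!: derivative_eq_intros)
next
  case False
  then show ?thesis unfolding phi_def by (auto intro!: derivative_eq_intros)
qed

lemma phi_mono: "s \<le> t \<Longrightarrow> phi \<mu> s \<le> phi \<mu> t"
proof -
  assume st: "s \<le> t"
  consider "\<mu> = 0" | "\<mu> > 0" | "\<mu> < 0" by linarith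
  then show ?thesis
  proof cases
    case 1 then show ?thesis using st by (simp add: phi_def)
  next
    case 2
    then have "exp (\<mu> * s) - 1 \<le> exp (\<mu> * t) - 1" using st by (simp add: mult_left_mono)
    then show ?thesis using 2 by (simp add: phi_def divide_right_mono)
  next
    case 3
    then have "exp (\<mu> * s) - 1 \<ge> exp (\<mu> * t) - 1" using st by (simp add: mult_left_mono_neg)
    then show ?thesis using 3 by (simp add: phi_def divide_right_mono_neg)
  qed
qed

lemma phi_nonneg: "t \<ge> 0 \<Longrightarrow> phi \<mu> t \<ge> 0"
  using phi_mono[of 0 t \<mu>] by (simp add: phi_0)

lemma le_by_eps:
  fixes x y K :: real
  assumes K: "K \<ge> 0" and h: "\<And>\<delta>. \<delta> > 0 \<Longrightarrow> x \<le> y + \<delta> * K"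
  shows "x \<le> y"
proof (rule ccontr)
  assume "\<not> x \<le> y"
  then have p: "x - y > 0" by simp
  define \<delta> where "\<delta> = (x - y) / (K + 1)"
  have d: "\<delta> > 0" using p K by (simp add: \<delta>_def)
  have "\<delta> * K < \<delta> * (K + 1)" using d by simp
  also have "\<dots> = x - y" using K by (simp add: \<delta>_def)
  finally show False using h[OF d] by linarith
qed

lemma cmp_core:
  fixes u :: "real \<Rightarrow> real"
  assumes ab: "a \<le> b" and cont: "continuous_on {a..b} u" and b0: "\<beta> \<ge> 0"
    and step: "\<And>s \<epsilon>. s \<in> {a<..b} \<Longrightarrow> \<epsilon> > 0 \<Longrightarrow>
        \<exists>d>0. \<forall>h. 0 < h \<and> h < d \<longrightarrow> u (s - h) \<ge> u s - h * (\<mu> * u s + \<beta> + \<epsilon>)"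
  shows "\<forall>s\<in>{a..b}. u s \<le> exp (\<mu> * (s - a)) * u a + \<beta> * phi \<mu> (s - a)"
proof -
  have strict: "u s < exp (\<mu> * (s - a)) * (u a + \<delta>) + (\<beta> + \<delta>) * phi \<mu> (s - a)"
    if \<delta>: "\<delta> > 0" and s: "s \<in> {a..b}" for \<delta> s
  proof -
    define g where "g s = exp (\<mu> * (s - a)) * (u a + \<delta>) + (\<beta> + \<delta>) * phi \<mu> (s - a)" for s
    define g' where "g' s = \<mu> * g s + \<beta> + \<delta>" for s
    have gd: "(g has_real_derivative g' s) (at s)" for s
    proof -
      have "(g has_real_derivative \<mu> * exp (\<mu> * (s - a)) * (u a + \<delta>) + (\<beta> + \<delta>) * exp (\<mu> * (s - a))) (at s)"
        unfolding g_def by (auto intro!: derivative_eq_intros phi_deriv)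
      moreover have "\<mu> * exp (\<mu> * (s - a)) * (u a + \<delta>) + (\<beta> + \<delta>) * exp (\<mu> * (s - a)) = g' s"
      proof -
        have E: "exp (\<mu> * (s - a)) = 1 + \<mu> * phi \<mu> (s - a)" using mu_phi[of \<mu> "s - a"] by simp
        show ?thesis unfolding g'_def g_def E by (simp add: algebra_simps)
      qed
      ultimately show ?thesis by simp
    qed
    have gc: "continuous_on {a..b} g"
      using gd by (meson DERIV_isCont continuous_at_imp_continuous_on)
    define w where "w s = u s - g s" for s
    have wc: "continuous_on {a..b} w" unfolding w_def using cont gc by (intro continuous_intros)
    define S where "S = {s \<in> {a..b}. (\<lambda>_. 0) s \<le> w s}"
    have clS: "closed S" unfolding S_def
      by (rule continuous_on_closed_Collect_le[OF continuous_on_const wc]) simp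
    have wa: "w a = - \<delta>" unfolding w_def g_def by (simp add: phi_0)
    have "S = {}"
    proof (rule ccontr)
      assume ne: "S \<noteq> {}"
      have bdd: "bdd_below S" unfolding S_def by (rule bdd_belowI[of _ a]) auto
      define t0 where "t0 = Inf S"
      have t0S: "t0 \<in> S" unfolding t0_def by (rule closed_contains_Inf[OF ne bdd clS])
      then have t0ab: "t0 \<in> {a..b}" and wt0: "w t0 \<ge> 0" unfolding S_def by auto
      have t0a: "t0 > a" using t0ab wt0 wa \<delta> by (cases "t0 = a") auto
      have below: "w s < 0" if "a \<le> s" "s < t0" for s
      proof (rule ccontr)
        assume "\<not> w s < 0"
        then have "s \<in> S" unfolding S_def using that t0ab by auto
        then have "t0 \<le> s" unfolding t0_def using bdd by (rule cInf_lower)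
        then show False using that by simp
      qed
      obtain d1 where d1: "d1 > 0" "\<And>h. 0 < h \<and> h < d1 \<Longrightarrow> u (t0 - h) \<ge> u t0 - h * (\<mu> * u t0 + \<beta> + \<delta> / 2)"
        using step[of t0 "\<delta> / 2"] t0a t0ab \<delta> by auto
      have "(g has_derivative (\<lambda>x. g' t0 * x)) (at t0 within UNIV)"
        using gd[of t0] by (simp add: has_field_derivative_def)
      then have "\<forall>e>0. \<exists>d>0. \<forall>y\<in>UNIV. norm (y - t0) < d \<longrightarrow> norm (g y - g t0 - g' t0 * (y - t0)) \<le> e * norm (y - t0)"
        unfolding has_derivative_within_alt by blast
      moreover have "\<delta> / 4 > 0" using \<delta> by simp
      ultimately obtain d2 where d2: "d2 > 0"
        "\<And>y. norm (y - t0) < d2 \<Longrightarrow> norm (g y - g t0 - g' t0 * (y - t0)) \<le> \<delta> / 4 * norm (y - t0)"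
        by blast
      define d3 where "d3 = 1 / (\<bar>\<mu>\<bar> + 1)"
      have d3: "d3 > 0" unfolding d3_def by (simp add: add_nonneg_pos)
      define h where "h = min (min d1 d2) (min d3 (t0 - a)) / 2"
      have h0: "h > 0" unfolding h_def using d1 d2 d3 t0a by auto
      have hd1: "h < d1" and hd2: "h < d2" and hd3: "h < d3" and hta: "h < t0 - a"
        unfolding h_def using d1 d2 d3 t0a by auto
      have uh: "u (t0 - h) \<ge> u t0 - h * (\<mu> * u t0 + \<beta> + \<delta> / 2)" using d1(2) h0 hd1 by auto
      have gh: "\<bar>g (t0 - h) - g t0 + h * g' t0\<bar> \<le> \<delta> / 4 * h"
        using d2(2)[of "t0 - h"] h0 hd2 by (simp add: mult.commute)
      have hmu: "h * \<mu> \<le> 1"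
      proof -
        have "h * \<mu> \<le> h * \<bar>\<mu>\<bar>" using h0 by (simp add: mult_left_mono)
        also have "\<dots> \<le> d3 * \<bar>\<mu>\<bar>" using hd3 by (simp add: mult_right_mono)
        also have "\<dots> \<le> 1" unfolding d3_def by (simp add: divide_le_eq)
        finally show ?thesis .
      qed
      have prod: "w t0 * (1 - h * \<mu>) \<ge> 0" using wt0 hmu by simp
      have e1: "w t0 * (1 - h * \<mu>) = u t0 - g t0 - h * \<mu> * u t0 + h * \<mu> * g t0"
        unfolding w_def by (simp add: algebra_simps)
      have e2: "h * g' t0 = h * \<mu> * g t0 + h * \<beta> + h * \<delta>" unfolding g'_def by (simp add: algebra_simps)
      have e3: "h * (\<mu> * u t0 + \<beta> + \<delta> / 2) = h * \<mu> * u t0 + h * \<beta> + h * \<delta> / 2" by (simp add: algebra_simps)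
      have gh': "g (t0 - h) \<le> g t0 - h * g' t0 + h * \<delta> / 4" 
      proof -
        have "g (t0 - h) - g t0 + h * g' t0 \<le> \<delta> / 4 * h" using gh by (rule abs_le_D1)
        then show ?thesis by (simp add: mult.commute)
      qed
      have e3': "h * (\<mu> * u t0 + \<beta> + \<delta> / 2) = h * \<mu> * u t0 + h * \<beta> + h * \<delta> / 2" by (simp add: algebra_simps)
      have hd: "h * \<delta> > 0" using h0 \<delta> by simp
      have "w (t0 - h) > 0" unfolding w_def using uh gh' prod e1 e2 e3' hd by linarith
      moreover have "w (t0 - h) < 0" using below[of "t0 - h"] h0 hta by simp
      ultimately show False by simp
    qed
    then have "w s < 0" using s unfolding S_def by auto
    then show ?thesis unfolding w_def g_def by simp
  qed
  show ?thesis
  proof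
    fix s assume s: "s \<in> {a..b}"
    show "u s \<le> exp (\<mu> * (s - a)) * u a + \<beta> * phi \<mu> (s - a)"
    proof (rule le_by_eps[of "exp (\<mu> * (s - a)) + phi \<mu> (s - a)"])
      show "0 \<le> exp (\<mu> * (s - a)) + phi \<mu> (s - a)" using s phi_nonneg[of "s - a" \<mu>]
        by (simp add: add_nonneg_nonneg)
      fix \<delta> :: real assume "\<delta> > 0"
      from strict[OF this s] show "u s \<le> exp (\<mu> * (s - a)) * u a + \<beta> * phi \<mu> (s - a) + \<delta> * (exp (\<mu> * (s - a)) + phi \<mu> (s - a))"
        by (simp add: algebra_simps)
    qed
  qed
qed

lemma cmp_curve:
  fixes y :: "real \<Rightarrow> 'v::euclidean_space" and N :: "'v \<Rightarrow> real" and wp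
  assumes n: "is_norm N" and cw: "compatible_weak_pairing wp N"
    and ab: "a \<le> b" and b0: "\<beta> \<ge> 0"
    and der: "\<And>s. s \<in> {a..b} \<Longrightarrow> (y has_vector_derivative y' s) (at s within {a..b})"
    and bnd: "\<And>s. s \<in> {a<..b} \<Longrightarrow> wp (y' s) (y s) \<le> \<mu> * (N (y s))\<^sup>2 + \<beta> * N (y s)"
  shows "\<forall>s\<in>{a..b}. N (y s) \<le> exp (\<mu> * (s - a)) * N (y a) + \<beta> * phi \<mu> (s - a)"
proof -
  obtain C where C: "C > 0" "\<And>x. N x \<le> C * norm x" using nrm_bound[OF n] by blast
  have yc: "continuous_on {a..b} y"
    using der has_vector_derivative_continuous continuous_on_eq_continuous_within by blast
  have uc: "continuous_on {a..b} (\<lambda>s. N (y s))"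
    by (rule continuous_on_compose2[OF nrm_cont[OF n] yc]) auto
  show ?thesis
  proof (rule cmp_core[OF ab uc b0])
    fix s \<epsilon> :: real assume s: "s \<in> {a<..b}" and e: "\<epsilon> > 0"
    obtain d1 where d1: "d1 > 0" "\<And>h. 0 < h \<and> h < d1 \<Longrightarrow> N (y s - h *\<^sub>R y' s) \<ge> N (y s) - h * (\<mu> * N (y s) + \<beta> + \<epsilon> / 2)"
      using left_step[OF n cw bnd[OF s] b0, of "\<epsilon> / 2"] e by auto
    have "(y has_derivative (\<lambda>t. t *\<^sub>R y' s)) (at s within {a..b})"
      using der[of s] s by (simp add: has_vector_derivative_def)
    then have "\<forall>e>0. \<exists>d>0. \<forall>z\<in>{a..b}. norm (z - s) < d \<longrightarrow> norm (y z - y s - (z - s) *\<^sub>R y' s) \<le> e * norm (z - s)"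
      unfolding has_derivative_within_alt by blast
    moreover have "\<epsilon> / (2 * C) > 0" using e C by simp
    ultimately obtain d2 where d2: "d2 > 0"
      "\<And>z. z \<in> {a..b} \<Longrightarrow> norm (z - s) < d2 \<Longrightarrow> norm (y z - y s - (z - s) *\<^sub>R y' s) \<le> \<epsilon> / (2 * C) * norm (z - s)"
      by blast
    show "\<exists>d>0. \<forall>h. 0 < h \<and> h < d \<longrightarrow> N (y (s - h)) \<ge> N (y s) - h * (\<mu> * N (y s) + \<beta> + \<epsilon>)"
    proof (intro exI[of _ "min d1 (min d2 (s - a))"] conjI allI impI)
      show "0 < min d1 (min d2 (s - a))" using d1 d2 s by auto
      fix h :: real assume h: "0 < h \<and> h < min d1 (min d2 (s - a))"
      have zab: "s - h \<in> {a..b}" using h s by auto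
      have r: "norm (y (s - h) - y s + h *\<^sub>R y' s) \<le> \<epsilon> / (2 * C) * h"
        using d2(2)[OF zab] h by (simp add: algebra_simps)
      have "N (y (s - h) - y s + h *\<^sub>R y' s) \<le> C * norm (y (s - h) - y s + h *\<^sub>R y' s)" by (rule C(2))
      also have "\<dots> \<le> C * (\<epsilon> / (2 * C) * h)" using r C(1) by (intro mult_left_mono) auto
      also have "\<dots> = h * (\<epsilon> / 2)" using C by (simp add: field_simps)
      finally have q: "N (y (s - h) - y s + h *\<^sub>R y' s) \<le> h * (\<epsilon> / 2)" .
      have rt: "N (y s - h *\<^sub>R y' s) - N (y (s - h)) \<le> N ((y s - h *\<^sub>R y' s) - y (s - h))" by (rule nrm_rev_tri[OF n])
      have eq: "N ((y s - h *\<^sub>R y' s) - y (s - h)) = N (y (s - h) - y s + h *\<^sub>R y' s)"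
      proof -
        have "(y s - h *\<^sub>R y' s) - y (s - h) = - (y (s - h) - y s + h *\<^sub>R y' s)" by (simp add: algebra_simps)
        then show ?thesis using nrm_neg[OF n] by metis
      qed
      have q2: "N (y s - h *\<^sub>R y' s) - N (y (s - h)) \<le> h * (\<epsilon> / 2)" using rt eq q by linarith
      have q3: "N (y s - h *\<^sub>R y' s) \<ge> N (y s) - h * (\<mu> * N (y s) + \<beta> + \<epsilon> / 2)" using d1(2) h by auto
      have "h * (\<mu> * N (y s) + \<beta> + \<epsilon>) = h * (\<mu> * N (y s) + \<beta> + \<epsilon> / 2) + h * (\<epsilon> / 2)" by (simp add: algebra_simps)
      then show "N (y (s - h)) \<ge> N (y s) - h * (\<mu> * N (y s) + \<beta> + \<epsilon>)" using q2 q3 by linarith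
    qed
  qed
qed

lemma sup_real_ub:
  fixes h :: "'i \<Rightarrow> ereal"
  assumes i: "i \<in> I" and fin: "Sup (h ` I) < \<infinity>" and hi: "h i = ereal r"
  shows "r \<le> real_of_ereal (Sup (h ` I))"
proof -
  have le: "ereal r \<le> Sup (h ` I)" using i hi by (metis SUP_upper)
  then have "Sup (h ` I) \<noteq> - \<infinity>" by auto
  with fin obtain c where c: "Sup (h ` I) = ereal c" by (cases "Sup (h ` I)") auto
  then show ?thesis using le by simp
qed

lemma sup_le_ub:
  fixes h :: "'i \<Rightarrow> ereal"
  assumes i: "i \<in> I" and b: "Sup (h ` I) \<le> ereal c" and hi: "h i = ereal r"
  shows "r \<le> c"
proof -
  have "ereal r \<le> Sup (h ` I)" using i hi by (metis SUP_upper)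
  then have "ereal r \<le> ereal c" using b by (rule order_trans)
  then show ?thesis by simp
qed

lemma sup_real_nonneg:
  fixes h :: "'i \<Rightarrow> ereal"
  assumes "\<And>i. i \<in> I \<Longrightarrow> h i \<ge> 0"
  shows "real_of_ereal (Sup (h ` I)) \<ge> 0"
proof (cases "I = {}")
  case True then show ?thesis by (simp add: bot_ereal_def)
next
  case False
  then obtain i where "i \<in> I" by auto
  then have "0 \<le> Sup (h ` I)" using assms by (metis SUP_upper order_trans)
  then show ?thesis by (simp add: real_of_ereal_pos)
qed

lemma Lz_bound:
  assumes nw: "is_norm NW" and nz: "is_norm NZ" and fin: "Lip_z F NW NZ X Z < \<infinity>"
    and x: "x \<in> X" and z1: "z1 \<in> Z" and z2: "z2 \<in> Z"
  shows "NW (F x z1 - F x z2) \<le> real_of_ereal (Lip_z F NW NZ X Z) * NZ (z1 - z2)"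
proof (cases "z1 = z2")
  case True then show ?thesis by (simp add: nrm_0[OF nw] nrm_0[OF nz])
next
  case False
  then have p: "NZ (z1 - z2) > 0" using nrm_pos[OF nz] by simp
  have "NW (F x z1 - F x z2) / NZ (z1 - z2) \<le> real_of_ereal (Lip_z F NW NZ X Z)"
    unfolding Lip_z_def by (rule sup_real_ub[where i="(x, z1, z2)", OF _ fin[unfolded Lip_z_def]]) (use x z1 z2 False in auto)
  then show ?thesis using p by (simp add: divide_le_eq)
qed

lemma Lx_bound:
  assumes nw: "is_norm NW" and nx: "is_norm NX" and fin: "Lip_x F NW NX X Z < \<infinity>"
    and x1: "x1 \<in> X" and x2: "x2 \<in> X" and z: "z \<in> Z"
  shows "NW (F x1 z - F x2 z) \<le> real_of_ereal (Lip_x F NW NX X Z) * NX (x1 - x2)"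
proof (cases "x1 = x2")
  case True then show ?thesis by (simp add: nrm_0[OF nw] nrm_0[OF nx])
next
  case False
  then have p: "NX (x1 - x2) > 0" using nrm_pos[OF nx] by simp
  have "NW (F x1 z - F x2 z) / NX (x1 - x2) \<le> real_of_ereal (Lip_x F NW NX X Z)"
    unfolding Lip_x_def by (rule sup_real_ub[where i="(z, x1, x2)", OF _ fin[unfolded Lip_x_def]]) (use x1 x2 z False in auto)
  then show ?thesis using p by (simp add: divide_le_eq)
qed

lemma Lz_nonneg:
  assumes nw: "is_norm NW" and nz: "is_norm NZ"
  shows "real_of_ereal (Lip_z F NW NZ X Z) \<ge> 0"
  unfolding Lip_z_def
  by (rule sup_real_nonneg) (auto simp: nrm_nonneg[OF nw] nrm_nonneg[OF nz])

lemma Lx_nonneg: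
  assumes nw: "is_norm NW" and nx: "is_norm NX"
  shows "real_of_ereal (Lip_x F NW NX X Z) \<ge> 0"
  unfolding Lip_x_def
  by (rule sup_real_nonneg) (auto simp: nrm_nonneg[OF nw] nrm_nonneg[OF nx])

lemma osLx_bound:
  assumes nx: "is_norm NX" and cw: "compatible_weak_pairing wp NX" and b: "osLip_x F wp NX X Z \<le> ereal c"
    and x1: "x1 \<in> X" and x2: "x2 \<in> X" and z: "z \<in> Z"
  shows "wp (F x1 z - F x2 z) (x1 - x2) \<le> c * (NX (x1 - x2))\<^sup>2"
proof (cases "x1 = x2")
  case True then show ?thesis by (simp add: wp_zero2[OF nx cw] nrm_0[OF nx])
next
  case False
  then have p: "NX (x1 - x2) > 0" using nrm_pos[OF nx] by simp
  have "wp (F x1 z - F x2 z) (x1 - x2) / (NX (x1 - x2))\<^sup>2 \<le> c"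
    by (rule sup_le_ub[where i="(z, x1, x2)", OF _ b[unfolded osLip_x_def]]) (use x1 x2 z False in auto)
  then show ?thesis using p by (simp add: divide_le_eq)
qed

lemma osL_bound:
  assumes nx: "is_norm NX" and cw: "compatible_weak_pairing wp NX" and b: "osLip F wp NX X \<le> ereal c"
    and x1: "x1 \<in> X" and x2: "x2 \<in> X"
  shows "wp (F x1 - F x2) (x1 - x2) \<le> c * (NX (x1 - x2))\<^sup>2"
proof (cases "x1 = x2")
  case True then show ?thesis by (simp add: wp_zero2[OF nx cw] nrm_0[OF nx])
next
  case False
  then have p: "NX (x1 - x2) > 0" using nrm_pos[OF nx] by simp
  have "wp (F x1 - F x2) (x1 - x2) / (NX (x1 - x2))\<^sup>2 \<le> c"
    by (rule sup_le_ub[where i="(x1, x2)", OF _ b[unfolded osLip_def]]) (use x1 x2 False in auto)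
  then show ?thesis using p by (simp add: divide_le_eq)
qed

lemma rec2:
  assumes m: "m11 \<ge> 0" "m12 \<ge> 0" "m21 \<ge> 0" "m22 \<ge> 0" "m22 < 1"
    and D: "(1 - m11) * (1 - m22) > m12 * m21"
  shows "\<exists>K l. K > 0 \<and> 0 < l \<and> l < 1 \<and> (\<forall>Nk ek :: nat \<Rightarrow> real.
     (\<forall>k. Nk k \<ge> 0) \<longrightarrow> (\<forall>k. ek k \<ge> 0) \<longrightarrow>
     (\<forall>k. Nk (Suc k) \<le> m11 * Nk k + m12 * ek k) \<longrightarrow>
     (\<forall>k. ek (Suc k) \<le> m21 * Nk k + m22 * ek k) \<longrightarrow>
     (\<forall>k. Nk k + ek k \<le> K * l ^ k * (Nk 0 + ek 0)))"
proof -
  define \<Delta> where "\<Delta> = (1 - m11) * (1 - m22) - m12 * m21"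
  have D0: "\<Delta> > 0" using D by (simp add: \<Delta>_def)
  define w1 where "w1 = 1 - m22"
  define s where "s = \<Delta> / (2 * (m21 + 1))"
  define w2 where "w2 = m12 + s"
  have w1: "w1 > 0" using m by (simp add: w1_def)
  have s0: "s > 0" using D0 m by (simp add: s_def)
  have w2: "w2 > 0" using s0 m by (simp add: w2_def)
  define r1 where "r1 = w1 * m11 + w2 * m21"
  define r2 where "r2 = w1 * m12 + w2 * m22"
  have sm: "s * m21 \<le> \<Delta> / 2"
  proof -
    have "s * m21 = \<Delta> / 2 * (m21 / (m21 + 1))" using m by (simp add: s_def field_simps)
    also have "\<dots> \<le> \<Delta> / 2 * 1" using D0 m by (intro mult_left_mono) auto
    finally show ?thesis by simp
  qed
  have "w1 - r1 = \<Delta> - s * m21" by (simp add: w1_def r1_def w2_def \<Delta>_def algebra_simps)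
  then have r1: "r1 < w1" using sm D0 by linarith
  have "w2 - r2 = s * (1 - m22)" by (simp add: w1_def r2_def w2_def algebra_simps)
  moreover have "s * m22 < s * 1" using s0 m by (intro mult_strict_left_mono) auto
  ultimately have r2: "r2 < w2" by (simp add: algebra_simps)
  define l where "l = max (1/2) (max (r1 / w1) (r2 / w2))"
  have l1: "l < 1" using r1 r2 w1 w2 by (simp add: l_def)
  have l0: "l > 0" by (simp add: l_def)
  have r1l: "r1 \<le> l * w1"
  proof -
    have "r1 / w1 \<le> l" by (simp add: l_def)
    then show ?thesis using w1 by (simp add: divide_le_eq)
  qed
  have r2l: "r2 \<le> l * w2"
  proof -
    have "r2 / w2 \<le> l" by (simp add: l_def)
    then show ?thesis using w2 by (simp add: divide_le_eq)
  qed
  define wm where "wm = min w1 w2"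
  define wM where "wM = max w1 w2"
  have wm: "wm > 0" using w1 w2 by (simp add: wm_def)
  have Kp: "wM / wm > 0" using wm w1 by (simp add: wM_def)
  have bound: "\<forall>k. Nk k + ek k \<le> wM / wm * l ^ k * (Nk 0 + ek 0)"
    if nn0: "\<forall>k. Nk k \<ge> 0" and ee0: "\<forall>k. ek k \<ge> 0"
      and rN0: "\<forall>k. Nk (Suc k) \<le> m11 * Nk k + m12 * ek k"
      and re0: "\<forall>k. ek (Suc k) \<le> m21 * Nk k + m22 * ek k" for Nk ek :: "nat \<Rightarrow> real"
  proof -
  have nn: "\<And>k. Nk k \<ge> 0" "\<And>k. ek k \<ge> 0" using nn0 ee0 by auto
  have rN: "\<And>k. Nk (Suc k) \<le> m11 * Nk k + m12 * ek k" using rN0 by auto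
  have re: "\<And>k. ek (Suc k) \<le> m21 * Nk k + m22 * ek k" using re0 by auto
  define W where "W k = w1 * Nk k + w2 * ek k" for k
  have Wstep: "W (Suc k) \<le> l * W k" for k
  proof -
    have "W (Suc k) \<le> w1 * (m11 * Nk k + m12 * ek k) + w2 * (m21 * Nk k + m22 * ek k)"
      unfolding W_def using rN[of k] re[of k] w1 w2 by (intro add_mono mult_left_mono) auto
    also have "\<dots> = r1 * Nk k + r2 * ek k" by (simp add: r1_def r2_def algebra_simps)
    also have "\<dots> \<le> (l * w1) * Nk k + (l * w2) * ek k"
      using r1l r2l nn by (intro add_mono mult_right_mono) auto
    also have "\<dots> = l * W k" by (simp add: W_def algebra_simps)
    finally show ?thesis .
  qed
  have Wk: "W k \<le> l ^ k * W 0" for k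
  proof (induction k)
    case 0 then show ?case by simp
  next
    case (Suc k)
    have "W (Suc k) \<le> l * W k" by (rule Wstep)
    also have "\<dots> \<le> l * (l ^ k * W 0)" using Suc l0 by (intro mult_left_mono) auto
    finally show ?case by simp
  qed
  have lo: "wm * (Nk k + ek k) \<le> W k" for k
  proof -
    have "wm * Nk k \<le> w1 * Nk k" "wm * ek k \<le> w2 * ek k"
      unfolding wm_def using nn[of k] by (auto intro: mult_right_mono)
    then show ?thesis unfolding W_def by (simp add: algebra_simps)
  qed
  have hi: "W 0 \<le> wM * (Nk 0 + ek 0)"
  proof -
    have "w1 * Nk 0 \<le> wM * Nk 0" "w2 * ek 0 \<le> wM * ek 0"
      unfolding wM_def using nn[of 0] by (auto intro: mult_right_mono)
    then show ?thesis unfolding W_def by (simp add: algebra_simps)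
  qed
  have "Nk k + ek k \<le> wM / wm * l ^ k * (Nk 0 + ek 0)" for k
  proof -
    have "wm * (Nk k + ek k) \<le> l ^ k * (wM * (Nk 0 + ek 0))"
      using lo[of k] Wk[of k] hi l0 by (meson order_trans mult_left_mono zero_le_power less_imp_le)
    then show ?thesis using wm by (simp add: field_simps)
  qed
  then show ?thesis by blast
  qed
  show ?thesis using Kp l0 l1 bound by blast
qed

lemma ereal_pos_real: "0 < e \<Longrightarrow> e < \<infinity> \<Longrightarrow> real_of_ereal e > 0"
  by (cases e) auto

lemma ereal_lt1_real: "e < 1 \<Longrightarrow> real_of_ereal e < 1"
  by (cases e) (auto simp: one_ereal_def)

lemma Giter_Suc: "Giter G (Suc m) x z = G x (Giter G m x z)"
  by (simp add: Giter_def)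

lemma Giter_Z: "\<forall>x\<in>X. \<forall>z\<in>Z. G x z \<in> Z \<Longrightarrow> x \<in> X \<Longrightarrow> z \<in> Z \<Longrightarrow> Giter G m x z \<in> Z"
  by (induction m) (auto simp: Giter_Suc, simp add: Giter_def)

lemma sqrt_sum_le: "0 \<le> u \<Longrightarrow> 0 \<le> v \<Longrightarrow> sqrt (u\<^sup>2 + v\<^sup>2) \<le> u + v"
  by (rule real_le_lsqrt) (auto simp: power2_eq_square algebra_simps)

lemma sum_le_sqrt: "0 \<le> u \<Longrightarrow> 0 \<le> v \<Longrightarrow> u + v \<le> sqrt 2 * sqrt (u\<^sup>2 + v\<^sup>2)"
proof -
  assume "0 \<le> u" "0 \<le> v"
  have "(u + v)\<^sup>2 \<le> 2 * (u\<^sup>2 + v\<^sup>2)"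
    using sum_squares_ge_zero[of "u - v" 0] by (simp add: power2_eq_square algebra_simps)
  then have "u + v \<le> sqrt (2 * (u\<^sup>2 + v\<^sup>2))" by (rule real_le_rsqrt)
  then show ?thesis by (metis real_sqrt_mult)
qed

lemma Tcrit_pos:
  assumes D: "C2 + C1 / \<zeta> > 0" and L: "LzG ^ n < 1"
  shows "T_crit \<xi> \<zeta> C1 C2 LzG n > 0"
proof -
  define Dn where "Dn = C2 + C1 / \<zeta>"
  have Dn: "Dn > 0" using D by (simp add: Dn_def)
  have q: "(1 - LzG ^ n) / Dn > 0" using Dn L by simp
  show ?thesis
  proof (cases "\<xi> = 0")
    case True then show ?thesis using q by (simp add: T_crit_def Dn_def)
  next
    case False
    define A where "A = \<xi> * (1 - LzG ^ n) / Dn + 1"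
    show ?thesis
    proof (cases "A \<le> 0")
      case True then show ?thesis using False by (simp add: T_crit_def Let_def A_def Dn_def)
    next
      case A: False
      have "ln A / \<xi> > 0"
      proof (cases "\<xi> > 0")
        case True
        then have "\<xi> * ((1 - LzG ^ n) / Dn) > 0" using q by (rule mult_pos_pos)
        then have "A > 1" by (simp add: A_def)
        then show ?thesis using True by simp
      next
        case xn: False
        then have xn: "\<xi> < 0" using False by simp
        have "\<xi> * ((1 - LzG ^ n) / Dn) < 0" using xn q by (rule mult_neg_pos)
        then have "A < 1" by (simp add: A_def)
        then have "ln A < 0" using A by simp
        then show ?thesis using xn by (simp add: divide_neg_neg)
      qed
      then show ?thesis using False A by (simp add: T_crit_def Let_def A_def Dn_def)
    qed
  qed
qed

lemma Tcrit_key: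
  assumes D: "C2 + C1 / \<zeta> > 0" and L: "LzG ^ n < 1" and T: "T > 0"
    and lt: "ereal T < T_crit \<xi> \<zeta> C1 C2 LzG n"
  shows "phi \<xi> T * (C2 + C1 / \<zeta>) < 1 - LzG ^ n"
proof -
  define Dn where "Dn = C2 + C1 / \<zeta>"
  have Dn: "Dn > 0" using D by (simp add: Dn_def)
  have goal: "phi \<xi> T < (1 - LzG ^ n) / Dn \<Longrightarrow> phi \<xi> T * Dn < 1 - LzG ^ n"
    using Dn by (simp add: pos_less_divide_eq)
  show ?thesis unfolding Dn_def[symmetric]
  proof (cases "\<xi> = 0")
    case True
    then have "T < (1 - LzG ^ n) / Dn" using lt by (simp add: T_crit_def Dn_def)
    then show "phi \<xi> T * Dn < 1 - LzG ^ n" using True goal by (simp add: phi_def)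
  next
    case False
    define A where "A = \<xi> * (1 - LzG ^ n) / Dn + 1"
    have xp: "\<xi> * phi \<xi> T = exp (\<xi> * T) - 1" by (rule mu_phi)
    show "phi \<xi> T * Dn < 1 - LzG ^ n"
    proof (cases "A \<le> 0")
      case True
      then have xn: "\<xi> < 0"
      proof -
        have "\<not> \<xi> > 0"
        proof
          assume "\<xi> > 0"
          then have "\<xi> * (1 - LzG ^ n) / Dn > 0" using Dn L by simp
          then show False using True by (simp add: A_def)
        qed
        then show ?thesis using False by simp
      qed
      have a1: "\<xi> * (1 - LzG ^ n) \<le> - Dn"
      proof -
        have "\<xi> * (1 - LzG ^ n) / Dn \<le> -1" using True by (simp add: A_def)
        then show ?thesis using Dn by (simp add: divide_le_eq)
      qed
      have "exp (\<xi> * T) * Dn > 0" using Dn by simp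
      moreover have "\<xi> * phi \<xi> T * Dn = exp (\<xi> * T) * Dn - Dn" unfolding xp by (simp add: algebra_simps)
      ultimately have "\<xi> * phi \<xi> T * Dn > - Dn" by linarith
      then have "\<xi> * (phi \<xi> T * Dn) > \<xi> * (1 - LzG ^ n)" using a1 by (simp add: algebra_simps)
      then show ?thesis using xn by (simp add: mult_less_cancel_left)
    next
      case Ap: False
      then have lt2: "T < ln A / \<xi>" using lt False by (simp add: T_crit_def Let_def A_def Dn_def)
      show ?thesis
      proof (cases "\<xi> > 0")
        case True
        then have "\<xi> * T < ln A" using lt2 by (simp add: pos_less_divide_eq mult.commute)
        then have "exp (\<xi> * T) < A" using Ap by (metis exp_less_cancel_iff exp_ln not_le)
        then have "\<xi> * phi \<xi> T < \<xi> * ((1 - LzG ^ n) / Dn)" using xp by (simp add: A_def)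
        then have "phi \<xi> T < (1 - LzG ^ n) / Dn" using True by (metis mult_less_cancel_left_pos times_divide_eq_right)
        then show ?thesis by (rule goal)
      next
        case False2: False
        then have xn: "\<xi> < 0" using False by simp
        then have "\<xi> * T > ln A" using lt2 by (simp add: neg_less_divide_eq mult.commute)
        then have "exp (\<xi> * T) > A" using Ap by (metis exp_less_cancel_iff exp_ln not_le)
        then have "\<xi> * phi \<xi> T > \<xi> * ((1 - LzG ^ n) / Dn)" using xp by (simp add: A_def)
        then have "phi \<xi> T < (1 - LzG ^ n) / Dn" using xn by (metis mult_less_cancel_left_neg times_divide_eq_right)
        then show ?thesis by (rule goal)
      qed
    qed
  qed
qed

theorem theorem3:
  fixes nX :: "real ^ 'nx \<Rightarrow> real" and nZ :: "real ^ 'nz \<Rightarrow> real"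
    and wp :: "real ^ 'nx \<Rightarrow> real ^ 'nx \<Rightarrow> real"
    and X :: "(real ^ 'nx) set" and Z :: "(real ^ 'nz) set"
    and f :: "real ^ 'nx \<Rightarrow> real ^ 'nz \<Rightarrow> real ^ 'nx"
    and G :: "real ^ 'nx \<Rightarrow> real ^ 'nz \<Rightarrow> real ^ 'nz"
    and \<xi> \<zeta> :: real
  assumes norm_X: "is_norm nX" and norm_Z: "is_norm nZ"
    and pairing: "compatible_weak_pairing wp nX"
    and convX: "convex X" and convZ: "convex Z"
    and zeroX: "0 \<in> X" and zeroZ: "0 \<in> Z"
    and cont_f: "continuous_on (X \<times> Z) (\<lambda>(x, z). f x z)"
    and cont_G: "continuous_on (X \<times> Z) (\<lambda>(x, z). G x z)"
    and G_into: "\<forall>x\<in>X. \<forall>z\<in>Z. G x z \<in> Z"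
    and f0: "f 0 0 = 0" and G0: "G 0 0 = 0"
    and A1: "Lip_x f nX nX X Z < \<infinity>"
    and A2f: "0 < Lip_z f nX nZ X Z" "Lip_z f nX nZ X Z < \<infinity>"
    and A2G: "0 < Lip_x G nZ nX X Z" "Lip_x G nZ nX X Z < \<infinity>"
    and A3: "Lip_z G nZ nZ X Z < 1"
    and fixpt_ex: "\<forall>x\<in>X. \<exists>z\<in>Z. G x z = z"
    and xi: "osLip_x f wp nX X Z \<le> ereal \<xi>"
    and zeta_pos: "\<zeta> > 0"
    and zeta: "osLip (\<lambda>x. f x (THE z. z \<in> Z \<and> G x z = z)) wp nX X \<le> ereal (- \<zeta>)"
  defines "Lxf \<equiv> real_of_ereal (Lip_x f nX nX X Z)"
    and "Lzf \<equiv> real_of_ereal (Lip_z f nX nZ X Z)"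
    and "LxG \<equiv> real_of_ereal (Lip_x G nZ nX X Z)"
    and "LzG \<equiv> real_of_ereal (Lip_z G nZ nZ X Z)"
  shows "\<forall>n::nat. n > 0 \<longrightarrow>
           T_crit \<xi> \<zeta> (C1_const Lxf Lzf LxG LzG) (C2_const Lzf LxG LzG n) LzG n > 0 \<and>
           (\<forall>T. 0 < T \<and> ereal T < T_crit \<xi> \<zeta> (C1_const Lxf Lzf LxG LzG) (C2_const Lzf LxG LzG n) LzG n
              \<longrightarrow> (\<exists>\<eta>1 \<eta>2 \<rho> \<alpha>. \<eta>1 > 0 \<and> \<eta>2 > 0 \<and> \<rho> > 0 \<and> \<alpha> > 0 \<and>
                    (\<forall>x zm1 zd. interconnected_solution f G X Z T n x zm1 zd \<longrightarrow>
                       (\<forall>t\<ge>0. eta_norm \<eta>1 \<eta>2 (nX (x t)) (nZ (zsig T zd t))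
                          \<le> \<rho> * exp (- \<alpha> * t) * eta_norm \<eta>1 \<eta>2 (nX (x 0)) (nZ (zsig T zd 0))))))"
proof (intro allI impI)
  fix n :: nat assume npos: "n > 0"
  have Lzf: "Lzf > 0" unfolding Lzf_def by (rule ereal_pos_real[OF A2f(1) A2f(2)])
  have LxG: "LxG > 0" unfolding LxG_def by (rule ereal_pos_real[OF A2G(1) A2G(2)])
  have LzG0: "LzG \<ge> 0" unfolding LzG_def by (rule Lz_nonneg[OF norm_Z norm_Z])
  have LzG1: "LzG < 1" unfolding LzG_def using A3 by (rule ereal_lt1_real)
  have Lxf0: "Lxf \<ge> 0" unfolding Lxf_def by (rule Lx_nonneg[OF norm_X norm_X])
  have A3fin: "Lip_z G nZ nZ X Z < \<infinity>" using A3 by (cases "Lip_z G nZ nZ X Z") auto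
  have fz: "nX (f x z1 - f x z2) \<le> Lzf * nZ (z1 - z2)" if "x \<in> X" "z1 \<in> Z" "z2 \<in> Z" for x z1 z2
    unfolding Lzf_def by (rule Lz_bound[OF norm_X norm_Z A2f(2) that])
  have fx: "nX (f x1 z - f x2 z) \<le> Lxf * nX (x1 - x2)" if "x1 \<in> X" "x2 \<in> X" "z \<in> Z" for x1 x2 z
    unfolding Lxf_def by (rule Lx_bound[OF norm_X norm_X A1 that])
  have Gx: "nZ (G x1 z - G x2 z) \<le> LxG * nX (x1 - x2)" if "x1 \<in> X" "x2 \<in> X" "z \<in> Z" for x1 x2 z
    unfolding LxG_def by (rule Lx_bound[OF norm_Z norm_X A2G(2) that])
  have Gz: "nZ (G x z1 - G x z2) \<le> LzG * nZ (z1 - z2)" if "x \<in> X" "z1 \<in> Z" "z2 \<in> Z" for x z1 z2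
    unfolding LzG_def by (rule Lz_bound[OF norm_Z norm_Z A3fin that])
  have fos: "wp (f x1 z - f x2 z) (x1 - x2) \<le> \<xi> * (nX (x1 - x2))\<^sup>2" if "x1 \<in> X" "x2 \<in> X" "z \<in> Z" for x1 x2 z
    by (rule osLx_bound[OF norm_X pairing xi that])
  define \<gamma> where "\<gamma> = LxG / (1 - LzG)"
  have \<gamma>: "\<gamma> > 0" unfolding \<gamma>_def using LxG LzG1 by simp
  have zs_uniq: "z1 = z2" if "x \<in> X" "z1 \<in> Z" "z2 \<in> Z" "G x z1 = z1" "G x z2 = z2" for x z1 z2
  proof -
    have "nZ (z1 - z2) \<le> LzG * nZ (z1 - z2)" using Gz[OF that(1-3)] that(4,5) by simp
    then have "(1 - LzG) * nZ (z1 - z2) \<le> 0" by (simp add: algebra_simps)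
    moreover have "nZ (z1 - z2) \<ge> 0" by (rule nrm_nonneg[OF norm_Z])
    ultimately have "nZ (z1 - z2) = 0" using LzG1 by (smt (verit) mult_pos_pos)
    then show ?thesis using nrm_eq0[OF norm_Z] by simp
  qed
  define zs where "zs x = (THE z. z \<in> Z \<and> G x z = z)" for x
  have zs: "zs x \<in> Z \<and> G x (zs x) = zs x" if "x \<in> X" for x
  proof -
    have "\<exists>!z. z \<in> Z \<and> G x z = z" using fixpt_ex that zs_uniq[OF that] by blast
    then show ?thesis unfolding zs_def by (rule theI')
  qed
  have zs0: "zs 0 = 0" using zs[OF zeroX] zs_uniq[OF zeroX _ zeroZ] G0 by blast
  have zs_lip: "nZ (zs x1 - zs x2) \<le> \<gamma> * nX (x1 - x2)" if "x1 \<in> X" "x2 \<in> X" for x1 x2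
  proof -
    have "nZ (zs x1 - zs x2) = nZ (G x1 (zs x1) - G x2 (zs x2))" using zs that by simp
    also have "\<dots> \<le> nZ (G x1 (zs x1) - G x2 (zs x1)) + nZ (G x2 (zs x1) - G x2 (zs x2))"
      by (rule nrm_diff_tri[OF norm_Z])
    also have "\<dots> \<le> LxG * nX (x1 - x2) + LzG * nZ (zs x1 - zs x2)"
      using Gx[OF that zs[OF that(1), THEN conjunct1]] Gz[OF that(2) zs[OF that(1), THEN conjunct1] zs[OF that(2), THEN conjunct1]] by simp
    finally have "(1 - LzG) * nZ (zs x1 - zs x2) \<le> LxG * nX (x1 - x2)" by (simp add: algebra_simps)
    then show ?thesis unfolding \<gamma>_def using LzG1 by (simp add: pos_le_divide_eq mult.commute divide_simps)
  qed
  have zs_bnd: "nZ (zs x) \<le> \<gamma> * nX x" if "x \<in> X" for x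
    using zs_lip[OF that zeroX] zs0 by simp
  define F where "F x = f x (zs x)" for x
  have zeta': "osLip F wp nX X \<le> ereal (- \<zeta>)" using zeta unfolding F_def zs_def .
  have F0: "F 0 = 0" unfolding F_def zs0 f0 ..
  have Fos: "wp (F x) x \<le> - \<zeta> * (nX x)\<^sup>2" if "x \<in> X" for x
    using osL_bound[OF norm_X pairing zeta' that zeroX] F0 by simp
  define lst where "lst = Lxf + Lzf * \<gamma>"
  have F_bnd: "nX (F x) \<le> lst * nX x" if "x \<in> X" for x
  proof -
    have "nX (F x) = nX (f x (zs x) - f 0 (zs 0))" unfolding F_def using zs0 f0 by simp
    also have "\<dots> \<le> nX (f x (zs x) - f 0 (zs x)) + nX (f 0 (zs x) - f 0 (zs 0))" by (rule nrm_diff_tri[OF norm_X])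
    also have "\<dots> \<le> Lxf * nX (x - 0) + Lzf * nZ (zs x - zs 0)"
      using fx[OF that zeroX zs[OF that, THEN conjunct1]] fz[OF zeroX zs[OF that, THEN conjunct1] zs[OF zeroX, THEN conjunct1]]
      by simp
    also have "\<dots> \<le> Lxf * nX x + Lzf * (\<gamma> * nX x)"
      using zs_bnd[OF that] zs0 Lzf by (simp add: mult_left_mono)
    finally show ?thesis unfolding lst_def by (simp add: algebra_simps)
  qed
  have Gi: "nZ (Giter G m x z - zs x) \<le> LzG ^ m * nZ (z - zs x)" if "x \<in> X" "z \<in> Z" for m x z
  proof (induction m)
    case 0 then show ?case by (simp add: Giter_def)
  next
    case (Suc m)
    have GZ: "Giter G m x z \<in> Z" by (rule Giter_Z[OF G_into that])
    have "nZ (Giter G (Suc m) x z - zs x) = nZ (G x (Giter G m x z) - G x (zs x))"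
      using zs[OF that(1)] by (simp add: Giter_Suc)
    also have "\<dots> \<le> LzG * nZ (Giter G m x z - zs x)" by (rule Gz[OF that(1) GZ zs[OF that(1), THEN conjunct1]])
    also have "\<dots> \<le> LzG * (LzG ^ m * nZ (z - zs x))" using Suc LzG0 by (rule mult_left_mono)
    finally show ?case by simp
  qed
  define Ln where "Ln = LzG ^ n"
  define C1 where "C1 = C1_const Lxf Lzf LxG LzG"
  define C2 where "C2 = C2_const Lzf LxG LzG n"
  have C1e: "C1 = Lzf * \<gamma> * lst" unfolding C1_def C1_const_def \<gamma>_def lst_def by (simp add: algebra_simps)
  have C2e: "C2 = Ln * \<gamma> * Lzf" unfolding C2_def C2_const_def \<gamma>_def Ln_def by (simp add: algebra_simps)
  have lst0: "lst > 0" unfolding lst_def using Lxf0 Lzf \<gamma> by (simp add: add_nonneg_pos)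
  have Ln0: "Ln \<ge> 0" unfolding Ln_def using LzG0 by simp
  have Ln1: "Ln < 1"
  proof -
    have "LzG ^ n \<le> LzG ^ 1" using npos LzG0 LzG1 by (intro power_decreasing) auto
    then show ?thesis unfolding Ln_def using LzG1 by simp
  qed
  have C1p: "C1 > 0" unfolding C1e using Lzf \<gamma> lst0 by simp
  have C2n: "C2 \<ge> 0" unfolding C2e using Ln0 \<gamma> Lzf by simp
  have Dp: "C2 + C1 / \<zeta> > 0" using C1p C2n zeta_pos by (simp add: add_nonneg_pos)
  show "T_crit \<xi> \<zeta> (C1_const Lxf Lzf LxG LzG) (C2_const Lzf LxG LzG n) LzG n > 0 \<and>
           (\<forall>T. 0 < T \<and> ereal T < T_crit \<xi> \<zeta> (C1_const Lxf Lzf LxG LzG) (C2_const Lzf LxG LzG n) LzG n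
              \<longrightarrow> (\<exists>\<eta>1 \<eta>2 \<rho> \<alpha>. \<eta>1 > 0 \<and> \<eta>2 > 0 \<and> \<rho> > 0 \<and> \<alpha> > 0 \<and>
                    (\<forall>x zm1 zd. interconnected_solution f G X Z T n x zm1 zd \<longrightarrow>
                       (\<forall>t\<ge>0. eta_norm \<eta>1 \<eta>2 (nX (x t)) (nZ (zsig T zd t))
                          \<le> \<rho> * exp (- \<alpha> * t) * eta_norm \<eta>1 \<eta>2 (nX (x 0)) (nZ (zsig T zd 0))))))"
  proof (intro conjI allI impI)
    show "T_crit \<xi> \<zeta> (C1_const Lxf Lzf LxG LzG) (C2_const Lzf LxG LzG n) LzG n > 0"
      using Tcrit_pos[OF Dp Ln1[unfolded Ln_def]] unfolding C1_def C2_def .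
    fix T :: real
    assume Tass: "0 < T \<and> ereal T < T_crit \<xi> \<zeta> (C1_const Lxf Lzf LxG LzG) (C2_const Lzf LxG LzG n) LzG n"
    then have T0: "T > 0" by simp
    have key: "phi \<xi> T * (C2 + C1 / \<zeta>) < 1 - Ln"
      using Tcrit_key[OF Dp Ln1[unfolded Ln_def] T0] Tass unfolding C1_def C2_def Ln_def by simp
    define p where "p = phi \<xi> T"
    have p0: "p \<ge> 0" unfolding p_def using T0 by (simp add: phi_nonneg)
    define qz where "qz = phi (- \<zeta>) T"
    have expq: "exp (- \<zeta> * T) = 1 - \<zeta> * qz" using mu_phi[of "- \<zeta>" T] unfolding qz_def by simp
    have qz0: "qz > 0"
    proof -
      have e1: "exp (- \<zeta> * T) < 1" using zeta_pos T0 by simp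
      then have "\<zeta> * qz > 0" using expq by linarith
      then show ?thesis using zeta_pos by (simp add: zero_less_mult_iff)
    qed
    define R where "R = 1 + \<gamma> * p * Lzf"
    have R1: "R \<ge> 1" unfolding R_def using \<gamma> p0 Lzf by simp
    define m11 where "m11 = exp (- \<zeta> * T) + Lzf * qz * \<gamma> * p * lst"
    define m12 where "m12 = Lzf * qz * R"
    define m21 where "m21 = Ln * \<gamma> * p * lst"
    define m22 where "m22 = Ln * R"
    have m11: "m11 \<ge> 0" unfolding m11_def using Lzf qz0 \<gamma> p0 lst0 by (simp add: add_nonneg_nonneg)
    have m12: "m12 \<ge> 0" unfolding m12_def using Lzf qz0 R1 by simp
    have m21: "m21 \<ge> 0" unfolding m21_def using Ln0 \<gamma> p0 lst0 by simp
    have m22: "m22 \<ge> 0" unfolding m22_def using Ln0 R1 by simp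
    have pC1: "p * (C1 / \<zeta>) \<ge> 0" using p0 C1p zeta_pos by simp
    have m22e: "m22 = Ln + p * C2" unfolding m22_def R_def C2e by (simp add: algebra_simps)
    have m22l: "m22 < 1" using key pC1 unfolding m22e p_def by (simp add: algebra_simps)
    have Did: "(1 - m11) * (1 - m22) - m12 * m21 = qz * (\<zeta> * (1 - Ln - p * (C2 + C1 / \<zeta>)))"
      unfolding m11_def m12_def m21_def m22_def expq R_def C2e C1e using zeta_pos
      by (simp add: field_simps)
    have Dpos: "(1 - m11) * (1 - m22) > m12 * m21"
    proof -
      have "1 - Ln - p * (C2 + C1 / \<zeta>) > 0" using key unfolding p_def by simp
      then have "qz * (\<zeta> * (1 - Ln - p * (C2 + C1 / \<zeta>))) > 0" using qz0 zeta_pos by simp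
      then show ?thesis using Did by simp
    qed
    obtain K l where Kl: "K > 0" "0 < l" "l < 1"
      and rec: "\<And>Nk ek :: nat \<Rightarrow> real. (\<forall>k. Nk k \<ge> 0) \<Longrightarrow> (\<forall>k. ek k \<ge> 0) \<Longrightarrow>
         (\<forall>k. Nk (Suc k) \<le> m11 * Nk k + m12 * ek k) \<Longrightarrow>
         (\<forall>k. ek (Suc k) \<le> m21 * Nk k + m22 * ek k) \<Longrightarrow>
         (\<forall>k. Nk k + ek k \<le> K * l ^ k * (Nk 0 + ek 0))"
      using rec2[OF m11 m12 m21 m22 m22l Dpos] by blast
    define \<alpha> where "\<alpha> = - ln l / T"
    have lnl: "ln l < 0" using Kl by simp
    have \<alpha>: "\<alpha> > 0" unfolding \<alpha>_def using lnl T0 by (intro divide_pos_pos) auto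
    define K1 where "K1 = 1 + p * lst + \<gamma> + p * Lzf"
    have K1: "K1 \<ge> 1" unfolding K1_def using p0 lst0 \<gamma> Lzf by simp
    define \<rho> where "\<rho> = sqrt 2 * K1 * K * (1 + \<gamma>) / l"
    have \<rho>: "\<rho> > 0" unfolding \<rho>_def using K1 Kl \<gamma> by simp
    have main: "\<forall>x zm1 zd. interconnected_solution f G X Z T n x zm1 zd \<longrightarrow>
                       (\<forall>t\<ge>0. eta_norm 1 1 (nX (x t)) (nZ (zsig T zd t))
                          \<le> \<rho> * exp (- \<alpha> * t) * eta_norm 1 1 (nX (x 0)) (nZ (zsig T zd 0)))"
    proof (intro allI impI)
      fix x zm1 zd and t :: real
      assume sol: "interconnected_solution f G X Z T n x zm1 zd" and t0: "t \<ge> 0"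
      have zm1: "zm1 \<in> Z" and xX: "\<And>t. t \<ge> 0 \<Longrightarrow> x t \<in> X"
        and zd0: "zd 0 = Giter G n (x 0) zm1"
        and zdS: "\<And>k. zd (Suc k) = Giter G n (x (real (Suc k) * T)) (zd k)"
        and der: "\<And>k t. t \<in> {real k * T .. real (Suc k) * T} \<Longrightarrow>
           (x has_vector_derivative f (x t) (zd k)) (at t within {real k * T .. real (Suc k) * T})"
        using sol unfolding interconnected_solution_def by auto
      have zdZ: "zd k \<in> Z" for k
      proof (induction k)
        case 0 show ?case unfolding zd0 by (rule Giter_Z[OF G_into xX zm1]) simp
      next
        case (Suc k) show ?case unfolding zdS by (rule Giter_Z[OF G_into xX Suc]) (simp add: T0 less_imp_le)
      qed
      define Nk where "Nk k = nX (x (real k * T))" for k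
      define ek where "ek k = nZ (zd k - zs (x (real k * T)))" for k
      have Nk0: "Nk k \<ge> 0" for k unfolding Nk_def by (rule nrm_nonneg[OF norm_X])
      have ek0: "ek k \<ge> 0" for k unfolding ek_def by (rule nrm_nonneg[OF norm_Z])
      have step: "Nk (Suc k) \<le> m11 * Nk k + m12 * ek k \<and> ek (Suc k) \<le> m21 * Nk k + m22 * ek k \<and>
          (\<forall>s\<in>{real k * T .. real (Suc k) * T}. nX (x s) + nZ (zd k) \<le> K1 * (Nk k + ek k))" for k
      proof -
        define a where "a = real k * T"
        define b where "b = real (Suc k) * T"
        define xk where "xk = x a"
        define z where "z = zd k"
        have ab: "a \<le> b" unfolding a_def b_def using T0 by simp
        have bma: "b - a = T" unfolding a_def b_def by (simp add: algebra_simps)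
        have a0: "a \<ge> 0" unfolding a_def using T0 by simp
        have zZ: "z \<in> Z" unfolding z_def by (rule zdZ)
        have Xs: "x s \<in> X" if "s \<in> {a..b}" for s using that a0 xX by auto
        have xkX: "xk \<in> X" unfolding xk_def using Xs ab by auto
        have dx: "(x has_vector_derivative f (x s) z) (at s within {a..b})" if "s \<in> {a..b}" for s
          using der[of s k] that unfolding a_def b_def z_def by simp
        have Nkk: "Nk k = nX xk" unfolding Nk_def xk_def a_def ..
        have ekk: "ek k = nZ (z - zs xk)" unfolding ek_def xk_def a_def z_def ..
        have zsxk: "zs xk \<in> Z" using zs[OF xkX] by simp
        define \<beta>k where "\<beta>k = nX (f xk z)"
        have \<beta>k0: "\<beta>k \<ge> 0" unfolding \<beta>k_def by (rule nrm_nonneg[OF norm_X])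
        have \<beta>kb: "\<beta>k \<le> Lzf * ek k + lst * Nk k"
        proof -
          have "\<beta>k \<le> nX (f xk z - F xk) + nX (F xk)"
            unfolding \<beta>k_def using nrm_tri[OF norm_X, of "f xk z - F xk" "F xk"] by simp
          also have "\<dots> \<le> Lzf * nZ (z - zs xk) + lst * nX xk"
            using fz[OF xkX zZ zsxk] F_bnd[OF xkX] unfolding F_def by (intro add_mono) auto
          finally show ?thesis unfolding Nkk ekk .
        qed
        have dA0: "\<forall>s\<in>{a..b}. nX (x s - xk) \<le> exp (\<xi> * (s - a)) * nX (x a - xk) + \<beta>k * phi \<xi> (s - a)"
        proof (rule cmp_curve[OF norm_X pairing ab \<beta>k0])
          fix s assume s: "s \<in> {a..b}"
          show "((\<lambda>s. x s - xk) has_vector_derivative f (x s) z) (at s within {a..b})"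
            using has_vector_derivative_diff[OF dx[OF s] has_vector_derivative_const[of xk]] by simp
        next
          fix s assume s: "s \<in> {a<..b}"
          then have sX: "x s \<in> X" using Xs by auto
          have "wp (f (x s) z) (x s - xk) = wp ((f (x s) z - f xk z) + f xk z) (x s - xk)" by simp
          also have "\<dots> \<le> wp (f (x s) z - f xk z) (x s - xk) + wp (f xk z) (x s - xk)"
            by (rule wp_add[OF norm_X pairing])
          also have "\<dots> \<le> \<xi> * (nX (x s - xk))\<^sup>2 + \<beta>k * nX (x s - xk)"
            using fos[OF sX xkX zZ] wp_CS[OF norm_X pairing, of "f xk z" "x s - xk"] unfolding \<beta>k_def
            by (intro add_mono) auto
          finally show "wp (f (x s) z) (x s - xk) \<le> \<xi> * (nX (x s - xk))\<^sup>2 + \<beta>k * nX (x s - xk)" .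
        qed
        have dA: "nX (x s - xk) \<le> p * (Lzf * ek k + lst * Nk k)" if s: "s \<in> {a..b}" for s
        proof -
          have "nX (x s - xk) \<le> \<beta>k * phi \<xi> (s - a)"
            using dA0 s unfolding xk_def by (simp add: nrm_0[OF norm_X])
          also have "\<dots> \<le> \<beta>k * p"
            unfolding p_def using s bma \<beta>k0 by (intro mult_left_mono phi_mono) auto
          also have "\<dots> \<le> (Lzf * ek k + lst * Nk k) * p" using \<beta>kb p0 by (rule mult_right_mono)
          finally show ?thesis by (simp add: mult.commute)
        qed
        define Ek where "Ek = R * ek k + \<gamma> * p * lst * Nk k"
        have Ek0: "Ek \<ge> 0" unfolding Ek_def using R1 ek0 \<gamma> p0 lst0 Nk0 by simp
        have eB: "nZ (z - zs (x s)) \<le> Ek" if s: "s \<in> {a..b}" for s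
        proof -
          have sX: "x s \<in> X" using Xs s by auto
          have "nZ (z - zs (x s)) \<le> nZ (z - zs xk) + nZ (zs xk - zs (x s))" by (rule nrm_diff_tri[OF norm_Z])
          also have "\<dots> \<le> ek k + \<gamma> * nX (xk - x s)" using zs_lip[OF xkX sX] unfolding ekk by simp
          also have "nX (xk - x s) = nX (x s - xk)" by (rule nrm_commute[OF norm_X])
          also have "ek k + \<gamma> * nX (x s - xk) \<le> ek k + \<gamma> * (p * (Lzf * ek k + lst * Nk k))"
            using dA[OF s] \<gamma> by (simp add: mult_left_mono)
          also have "\<dots> = Ek" unfolding Ek_def R_def by (simp add: algebra_simps)
          finally show ?thesis .
        qed
        have LE0: "Lzf * Ek \<ge> 0" using Lzf Ek0 by simp
        have C0: "\<forall>s\<in>{a..b}. nX (x s) \<le> exp (- \<zeta> * (s - a)) * nX (x a) + (Lzf * Ek) * phi (- \<zeta>) (s - a)"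
        proof (rule cmp_curve[OF norm_X pairing ab LE0])
          fix s assume s: "s \<in> {a..b}"
          show "(x has_vector_derivative f (x s) z) (at s within {a..b})" by (rule dx[OF s])
        next
          fix s assume s: "s \<in> {a<..b}"
          then have s': "s \<in> {a..b}" by auto
          then have sX: "x s \<in> X" using Xs by auto
          have "wp (f (x s) z) (x s) = wp (F (x s) + (f (x s) z - F (x s))) (x s)" by simp
          also have "\<dots> \<le> wp (F (x s)) (x s) + wp (f (x s) z - F (x s)) (x s)"
            by (rule wp_add[OF norm_X pairing])
          also have "\<dots> \<le> - \<zeta> * (nX (x s))\<^sup>2 + (Lzf * Ek) * nX (x s)"
          proof (rule add_mono)
            show "wp (F (x s)) (x s) \<le> - \<zeta> * (nX (x s))\<^sup>2" by (rule Fos[OF sX])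
            have "wp (f (x s) z - F (x s)) (x s) \<le> nX (f (x s) z - F (x s)) * nX (x s)"
              by (rule wp_CS[OF norm_X pairing])
            also have "\<dots> \<le> (Lzf * Ek) * nX (x s)"
            proof (rule mult_right_mono)
              have "nX (f (x s) z - F (x s)) \<le> Lzf * nZ (z - zs (x s))"
                unfolding F_def using fz[OF sX zZ] zs[OF sX] by simp
              also have "\<dots> \<le> Lzf * Ek" using eB[OF s'] Lzf by simp
              finally show "nX (f (x s) z - F (x s)) \<le> Lzf * Ek" .
            qed (rule nrm_nonneg[OF norm_X])
            finally show "wp (f (x s) z - F (x s)) (x s) \<le> (Lzf * Ek) * nX (x s)" .
          qed
          finally show "wp (f (x s) z) (x s) \<le> - \<zeta> * (nX (x s))\<^sup>2 + Lzf * Ek * nX (x s)" .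
        qed
        have stN: "Nk (Suc k) \<le> m11 * Nk k + m12 * ek k"
        proof -
          have "Nk (Suc k) = nX (x b)" unfolding Nk_def b_def ..
          also have "\<dots> \<le> exp (- \<zeta> * (b - a)) * nX (x a) + (Lzf * Ek) * phi (- \<zeta>) (b - a)"
            using C0 ab by auto
          also have "\<dots> = m11 * Nk k + m12 * ek k"
            unfolding bma m11_def m12_def Ek_def qz_def[symmetric] Nkk xk_def by (simp add: algebra_simps)
          finally show ?thesis .
        qed
        have ste: "ek (Suc k) \<le> m21 * Nk k + m22 * ek k"
        proof -
          have bX: "x b \<in> X" using Xs ab by auto
          have "ek (Suc k) = nZ (Giter G n (x b) z - zs (x b))"
            unfolding ek_def zdS b_def z_def ..
          also have "\<dots> \<le> Ln * nZ (z - zs (x b))" unfolding Ln_def by (rule Gi[OF bX zZ])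
          also have "\<dots> \<le> Ln * Ek" using eB[of b] ab Ln0 by (intro mult_left_mono) auto
          also have "\<dots> = m21 * Nk k + m22 * ek k" unfolding Ek_def m21_def m22_def by (simp add: algebra_simps)
          finally show ?thesis .
        qed
        have inner: "\<forall>s\<in>{real k * T .. real (Suc k) * T}. nX (x s) + nZ (zd k) \<le> K1 * (Nk k + ek k)"
        proof
          fix s assume "s \<in> {real k * T .. real (Suc k) * T}"
          then have s: "s \<in> {a..b}" unfolding a_def b_def .
          have "nX (x s) \<le> nX (x s - xk) + nX xk" using nrm_tri[OF norm_X, of "x s - xk" xk] by simp
          also have "\<dots> \<le> p * (Lzf * ek k + lst * Nk k) + Nk k" using dA[OF s] Nkk by simp
          finally have i1: "nX (x s) \<le> p * (Lzf * ek k + lst * Nk k) + Nk k" .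
          have "nZ z \<le> nZ (z - zs xk) + nZ (zs xk)" using nrm_tri[OF norm_Z, of "z - zs xk" "zs xk"] by simp
          also have "\<dots> \<le> ek k + \<gamma> * Nk k" using zs_bnd[OF xkX] unfolding ekk Nkk by simp
          finally have i2: "nZ z \<le> ek k + \<gamma> * Nk k" .
          have c1: "(1 + p * lst + \<gamma>) * Nk k \<le> K1 * Nk k"
            unfolding K1_def using Nk0[of k] p0 Lzf by (intro mult_right_mono) auto
          have c2: "(1 + p * Lzf) * ek k \<le> K1 * ek k"
            unfolding K1_def using ek0[of k] p0 lst0 \<gamma> by (intro mult_right_mono) auto
          have "nX (x s) + nZ z \<le> (1 + p * lst + \<gamma>) * Nk k + (1 + p * Lzf) * ek k"
            using i1 i2 by (simp add: algebra_simps)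
          also have "\<dots> \<le> K1 * (Nk k + ek k)" using c1 c2 by (simp add: algebra_simps)
          finally show "nX (x s) + nZ (zd k) \<le> K1 * (Nk k + ek k)" unfolding z_def .
        qed
        show ?thesis using stN ste inner by blast
      qed
      have bnd: "\<forall>k. Nk k + ek k \<le> K * l ^ k * (Nk 0 + ek 0)"
        by (rule rec) (use Nk0 ek0 step in auto)
      define k where "k = nat \<lfloor>t / T\<rfloor>"
      have fl0: "\<lfloor>t / T\<rfloor> \<ge> 0" using t0 T0 by simp
      have rk: "real k = of_int \<lfloor>t / T\<rfloor>" unfolding k_def using fl0 by simp
      have fl1: "of_int \<lfloor>t / T\<rfloor> \<le> t / T" by (rule of_int_floor_le)
      have fl2: "t / T < of_int \<lfloor>t / T\<rfloor> + 1" by (rule real_of_int_floor_add_one_gt)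
      have kt0: "real k \<le> t / T" using fl1 rk by simp
      have kt: "real k * T \<le> t" using kt0 T0 by (simp add: le_divide_eq)
      have tk: "t \<le> real (Suc k) * T"
      proof -
        have "t / T < real k + 1" using fl2 rk by simp
        then have "t < (real k + 1) * T" using T0 by (simp add: pos_divide_less_eq)
        then show ?thesis by (simp add: algebra_simps)
      qed
      have kge: "real k \<ge> t / T - 1" using fl2 rk by simp
      have zsig_t: "zsig T zd t = zd k" unfolding zsig_def k_def ..
      have zsig_0: "zsig T zd 0 = zd 0" unfolding zsig_def by simp
      define u where "u = nX (x t)"
      define v where "v = nZ (zd k)"
      define u0 where "u0 = nX (x 0)"
      define v0 where "v0 = nZ (zd 0)"
      have u: "u \<ge> 0" unfolding u_def by (rule nrm_nonneg[OF norm_X])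
      have v: "v \<ge> 0" unfolding v_def by (rule nrm_nonneg[OF norm_Z])
      have u0: "u0 \<ge> 0" unfolding u0_def by (rule nrm_nonneg[OF norm_X])
      have v0: "v0 \<ge> 0" unfolding v0_def by (rule nrm_nonneg[OF norm_Z])
      have inner: "u + v \<le> K1 * (Nk k + ek k)"
        using step[of k] kt tk unfolding u_def v_def by auto
      have Nk00: "Nk 0 = u0" unfolding Nk_def u0_def by simp
      have x0X: "x 0 \<in> X" using xX by simp
      have e0b: "ek 0 \<le> v0 + \<gamma> * u0"
      proof -
        have "ek 0 = nZ (zd 0 + - zs (x 0))" unfolding ek_def by simp
        also have "\<dots> \<le> nZ (zd 0) + nZ (- zs (x 0))" by (rule nrm_tri[OF norm_Z])
        also have "\<dots> \<le> v0 + \<gamma> * u0" using zs_bnd[OF x0X] nrm_neg[OF norm_Z] unfolding v0_def u0_def by simp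
        finally show ?thesis .
      qed
      have N0b: "Nk 0 + ek 0 \<le> (1 + \<gamma>) * (u0 + v0)"
      proof -
        have "\<gamma> * v0 \<ge> 0" using \<gamma> v0 by simp
        then show ?thesis using e0b Nk00 by (simp add: algebra_simps)
      qed
      have lk: "l ^ k \<le> exp (- \<alpha> * t) / l"
      proof -
        have "l ^ k = exp (ln l) ^ k" using Kl by simp
        also have "\<dots> = exp (real k * ln l)" by (rule exp_of_nat_mult[symmetric])
        also have "\<dots> \<le> exp ((t / T - 1) * ln l)"
          using kge lnl by (simp add: mult_right_mono_neg)
        also have "(t / T - 1) * ln l = - \<alpha> * t - ln l" unfolding \<alpha>_def using T0 by (simp add: field_simps)
        also have "exp (- \<alpha> * t - ln l) = exp (- \<alpha> * t) / l" using Kl by (simp add: exp_diff)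
        finally show ?thesis .
      qed
      have "eta_norm 1 1 u v = sqrt (u\<^sup>2 + v\<^sup>2)" by (simp add: eta_norm_def)
      also have "\<dots> \<le> u + v" by (rule sqrt_sum_le[OF u v])
      also have "\<dots> \<le> K1 * (Nk k + ek k)" by (rule inner)
      also have "\<dots> \<le> K1 * (K * l ^ k * (Nk 0 + ek 0))" using bnd K1 by (intro mult_left_mono) auto
      also have "\<dots> \<le> K1 * (K * (exp (- \<alpha> * t) / l) * ((1 + \<gamma>) * (u0 + v0)))"
      proof -
        have "K * l ^ k * (Nk 0 + ek 0) \<le> K * (exp (- \<alpha> * t) / l) * ((1 + \<gamma>) * (u0 + v0))"
          using lk N0b Kl Nk0[of 0] ek0[of 0]
          by (intro mult_mono mult_left_mono) auto
        then show ?thesis using K1 by (intro mult_left_mono) auto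
      qed
      also have "\<dots> \<le> K1 * (K * (exp (- \<alpha> * t) / l) * ((1 + \<gamma>) * (sqrt 2 * sqrt (u0\<^sup>2 + v0\<^sup>2))))"
        using sum_le_sqrt[OF u0 v0] K1 Kl \<gamma> by (intro mult_left_mono) auto
      also have "\<dots> = \<rho> * exp (- \<alpha> * t) * eta_norm 1 1 u0 v0"
        unfolding \<rho>_def eta_norm_def by simp
      finally show "eta_norm 1 1 (nX (x t)) (nZ (zsig T zd t)) \<le> \<rho> * exp (- \<alpha> * t) * eta_norm 1 1 (nX (x 0)) (nZ (zsig T zd 0))"
        unfolding zsig_t zsig_0 u_def v_def u0_def v0_def .
    qed
    show "\<exists>\<eta>1 \<eta>2 \<rho> \<alpha>. \<eta>1 > 0 \<and> \<eta>2 > 0 \<and> \<rho> > 0 \<and> \<alpha> > 0 \<and>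
                    (\<forall>x zm1 zd. interconnected_solution f G X Z T n x zm1 zd \<longrightarrow>
                       (\<forall>t\<ge>0. eta_norm \<eta>1 \<eta>2 (nX (x t)) (nZ (zsig T zd t))
                          \<le> \<rho> * exp (- \<alpha> * t) * eta_norm \<eta>1 \<eta>2 (nX (x 0)) (nZ (zsig T zd 0))))"
      using \<rho> \<alpha> main zero_less_one by blast
  qed
qed

end
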